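(* For $n\ge1$, $$\left|\Pi_n\wr C_2(1^11^1,1^11^2,1^22^1)\right|=\left|\Pi_n\wr C_2(1^11^2,1^12^1,1^12^2)\right|=\left|\Pi_n\wr C_2(1^11^2,1^12^1,1^22^1)\right|=2n.$$
   Context: For $n\ge0$ let $[n]=\{1,\dots,n\}$. A $2$-colored set partition of $[n]$ is a set partition of $[n]$ together with an assignment of a color from $\{1,2\}$ to each element; $\Pi_n\wr C_2$ is the set of these. For a set $S$ of patterns, $\Pi_n\wr C_2(S)$ is the set of such colored partitions avoiding every pattern in $S$ in the pattern sense. For the patterns used here: $\sigma$ contains $1^11^1$ iff two elements in the same block have the same color; $1^11^2$ iff there are $i<j$ in the same block with $i$ colored $1$ and $j$ colored $2$; $1^12^1$ iff two elements in different blocks have the same color; $1^12^2$ iff there are $i<j$ in different blocks with $i$ colored $1$ and $j$ colored $2$; $1^22^1$ iff there are $i<j$ in different blocks with $i$ colored $2$ and $j$ colored $1$. *)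

theory Defs
  imports "HOL-Library.Disjoint_Sets" "HOL-Library.FuncSet"
begin

type_synonym colored_partition = "nat set set \<times> (nat \<Rightarrow> nat)"

definition colored_partitions :: "nat \<Rightarrow> colored_partition set" where
  "colored_partitions n = {(P, c). partition_on {1..n} P \<and> c \<in> {1..n} \<rightarrow>\<^sub>E {1, 2}}"

definition same_block :: "nat set set \<Rightarrow> nat \<Rightarrow> nat \<Rightarrow> bool" where
  "same_block P i j \<longleftrightarrow> (\<exists>B\<in>P. i \<in> B \<and> j \<in> B)"

datatype pattern = P1a1a | P1a1b | P1a2a | P1a2b | P1b2a
  \<comment> \<open>1^1 1^1, 1^1 1^2, 1^1 2^1, 1^1 2^2, 1^2 2^1\<close>

fun contains :: "nat \<Rightarrow> colored_partition \<Rightarrow> pattern \<Rightarrow> bool" where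
  "contains n (P, c) P1a1a \<longleftrightarrow>
     (\<exists>i\<in>{1..n}. \<exists>j\<in>{1..n}. i < j \<and> same_block P i j \<and> c i = c j)"
| "contains n (P, c) P1a1b \<longleftrightarrow>
     (\<exists>i\<in>{1..n}. \<exists>j\<in>{1..n}. i < j \<and> same_block P i j \<and> c i = 1 \<and> c j = 2)"
| "contains n (P, c) P1a2a \<longleftrightarrow>
     (\<exists>i\<in>{1..n}. \<exists>j\<in>{1..n}. i < j \<and> \<not> same_block P i j \<and> c i = c j)"
| "contains n (P, c) P1a2b \<longleftrightarrow>
     (\<exists>i\<in>{1..n}. \<exists>j\<in>{1..n}. i < j \<and> \<not> same_block P i j \<and> c i = 1 \<and> c j = 2)"
| "contains n (P, c) P1b2a \<longleftrightarrow>
     (\<exists>i\<in>{1..n}. \<exists>j\<in>{1..n}. i < j \<and> \<not> same_block P i j \<and> c i = 2 \<and> c j = 1)"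

definition avoiding :: "nat \<Rightarrow> pattern set \<Rightarrow> colored_partition set" where
  "avoiding n S = {\<sigma> \<in> colored_partitions n. \<forall>p\<in>S. \<not> contains n \<sigma> p}"

end

theory Submission imports Defs begin

definition Pof :: "nat set \<Rightarrow> (nat \<Rightarrow> nat \<Rightarrow> bool) \<Rightarrow> nat set set" where
  "Pof A R = (\<lambda>x. {y\<in>A. R x y}) ` A"

lemma sb_refl: "partition_on A P \<Longrightarrow> x \<in> A \<Longrightarrow> same_block P x x"
  unfolding same_block_def partition_on_def by auto

lemma sb_sym: "same_block P x y \<Longrightarrow> same_block P y x"
  unfolding same_block_def by auto

lemma sb_in: "partition_on A P \<Longrightarrow> same_block P x y \<Longrightarrow> x \<in> A \<and> y \<in> A"
  unfolding same_block_def partition_on_def by auto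

lemma sb_trans: assumes "partition_on A P" "same_block P x y" "same_block P y z"
  shows "same_block P x z"
proof -
  obtain B C where B: "B \<in> P" "x \<in> B" "y \<in> B" and C: "C \<in> P" "y \<in> C" "z \<in> C"
    using assms(2,3) unfolding same_block_def by auto
  have "B = C" using disjointD[OF partition_onD2[OF assms(1)] B(1) C(1)] B C by blast
  thus ?thesis using B C unfolding same_block_def by auto
qed

lemma block_eq: assumes "partition_on A P" "B \<in> P" "x \<in> B"
  shows "{y\<in>A. same_block P x y} = B"
proof
  show "{y\<in>A. same_block P x y} \<subseteq> B"
  proof
    fix y assume "y \<in> {y\<in>A. same_block P x y}"
    then obtain C where C: "C \<in> P" "x \<in> C" "y \<in> C" unfolding same_block_def by auto
    have "B = C" using disjointD[OF partition_onD2[OF assms(1)] assms(2) C(1)] assms(3) C by blast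
    thus "y \<in> B" using C by simp
  qed
  show "B \<subseteq> {y\<in>A. same_block P x y}"
    using assms partition_onD1[OF assms(1)] unfolding same_block_def by auto
qed

lemma P_eq_Pof: assumes "partition_on A P" shows "P = Pof A (same_block P)"
proof
  show "P \<subseteq> Pof A (same_block P)"
  proof
    fix B assume B: "B \<in> P"
    then obtain x where x: "x \<in> B" using partition_onD3[OF assms] by (metis ex_in_conv)
    have "x \<in> A" using partition_onD1[OF assms] B x by auto
    thus "B \<in> Pof A (same_block P)" unfolding Pof_def using block_eq[OF assms B x] by blast
  qed
  show "Pof A (same_block P) \<subseteq> P"
  proof
    fix B assume "B \<in> Pof A (same_block P)"
    then obtain x where x: "x \<in> A" "B = {y\<in>A. same_block P x y}" unfolding Pof_def by auto
    then obtain C where "C \<in> P" "x \<in> C" using partition_onD1[OF assms] by auto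
    thus "B \<in> P" using block_eq[OF assms] x by auto
  qed
qed

lemma Pof_cong: "(\<And>x y. x \<in> A \<Longrightarrow> y \<in> A \<Longrightarrow> R x y = R' x y) \<Longrightarrow> Pof A R = Pof A R'"
  unfolding Pof_def by (rule image_cong) auto

lemma Pof_sb: assumes "\<And>x. x \<in> A \<Longrightarrow> R x x" "\<And>x y. x \<in> A \<Longrightarrow> y \<in> A \<Longrightarrow> R x y \<Longrightarrow> R y x"
  "\<And>x y z. x \<in> A \<Longrightarrow> y \<in> A \<Longrightarrow> z \<in> A \<Longrightarrow> R x y \<Longrightarrow> R y z \<Longrightarrow> R x z"
  shows "same_block (Pof A R) x y \<longleftrightarrow> x \<in> A \<and> y \<in> A \<and> R x y"
proof
  assume "same_block (Pof A R) x y"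
  then obtain B where B: "B \<in> Pof A R" "x \<in> B" "y \<in> B" unfolding same_block_def by blast
  then obtain z where z: "z \<in> A" "B = {u\<in>A. R z u}" unfolding Pof_def by blast
  have zz: "x \<in> A" "y \<in> A" "R z x" "R z y" using B z by auto
  have "R x z" by (rule assms(2)[OF z(1) zz(1) zz(3)])
  hence "R x y" by (rule assms(3)[OF zz(1) z(1) zz(2) _ zz(4)])
  thus "x \<in> A \<and> y \<in> A \<and> R x y" using zz by blast
next
  assume h: "x \<in> A \<and> y \<in> A \<and> R x y"
  have m1: "{u\<in>A. R x u} \<in> Pof A R" unfolding Pof_def using h by blast
  have m2: "x \<in> {u\<in>A. R x u}" using h assms(1)[of x] by blast
  have m3: "y \<in> {u\<in>A. R x u}" using h by blast
  show "same_block (Pof A R) x y" unfolding same_block_def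
  proof (rule bexI[OF _ m1])
    show "x \<in> {u\<in>A. R x u} \<and> y \<in> {u\<in>A. R x u}" using m2 m3 by (rule conjI)
  qed
qed

lemma Pof_part: assumes "\<And>x. x \<in> A \<Longrightarrow> R x x" "\<And>x y. x \<in> A \<Longrightarrow> y \<in> A \<Longrightarrow> R x y \<Longrightarrow> R y x"
  "\<And>x y z. x \<in> A \<Longrightarrow> y \<in> A \<Longrightarrow> z \<in> A \<Longrightarrow> R x y \<Longrightarrow> R y z \<Longrightarrow> R x z"
  shows "partition_on A (Pof A R)"
  unfolding partition_on_def disjoint_def Pof_def
proof (intro conjI ballI impI)
  show "\<Union> ((\<lambda>x. {y \<in> A. R x y}) ` A) = A" using assms(1) by auto
  show "{} \<notin> (\<lambda>x. {y \<in> A. R x y}) ` A" using assms(1) by auto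
  fix B C assume "B \<in> (\<lambda>x. {y \<in> A. R x y}) ` A" "C \<in> (\<lambda>x. {y \<in> A. R x y}) ` A" "B \<noteq> C"
  then obtain x z where xz: "x \<in> A" "z \<in> A" "B = {y \<in> A. R x y}" "C = {y \<in> A. R z y}" "B \<noteq> C" by auto
  show "B \<inter> C = {}"
  proof (rule ccontr)
    assume "B \<inter> C \<noteq> {}"
    then obtain w where w: "w \<in> A" "R x w" "R z w" using xz by auto
    have "R w z" by (rule assms(2)[OF xz(2) w(1) w(3)])
    hence xzr: "R x z" by (rule assms(3)[OF xz(1) w(1) xz(2) w(2)])
    have zxr: "R z x" by (rule assms(2)[OF xz(1) xz(2) xzr])
    have "R x u \<longleftrightarrow> R z u" if u: "u \<in> A" for u
    proof
      assume "R x u" thus "R z u" by (rule assms(3)[OF xz(2) xz(1) u zxr])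
    next
      assume "R z u" thus "R x u" by (rule assms(3)[OF xz(1) xz(2) u xzr])
    qed
    hence "B = C" using xz(3,4) by blast
    thus False using xz(5) by contradiction
  qed
qed

lemma dc: fixes n :: nat shows "(\<And>x y. 1 \<le> y \<Longrightarrow> y < x \<Longrightarrow> x \<le> n \<Longrightarrow> Q x \<Longrightarrow> Q y) \<Longrightarrow> \<exists>k\<le>n. \<forall>x\<in>{1..n}. Q x \<longleftrightarrow> x \<le> k"
proof (induction n)
  case 0 thus ?case by auto
next
  case (Suc n)
  show ?case
  proof (cases "Q (Suc n)")
    case True
    hence "\<forall>x\<in>{1..Suc n}. Q x" using Suc.prems by (metis atLeastAtMost_iff le_neq_implies_less order_refl)
    thus ?thesis by auto
  next
    case False
    obtain k where "k \<le> n" "\<forall>x\<in>{1..n}. Q x \<longleftrightarrow> x \<le> k" using Suc by (meson le_SucI)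
    thus ?thesis using False by (intro exI[of _ k]) (auto simp: le_Suc_eq)
  qed
qed

lemma PiE_restr: assumes "c \<in> A \<rightarrow>\<^sub>E B" "\<And>x. x \<in> A \<Longrightarrow> c x = f x" shows "c = restrict f A"
proof (rule ext)
  fix x show "c x = restrict f A x"
  proof (cases "x \<in> A")
    case True thus ?thesis using assms(2) by simp
  next
    case False thus ?thesis using PiE_arb[OF assms(1) False] by simp
  qed
qed


lemma card_two_fam:
  assumes "n \<ge> 1" "inj_on F {0..n}" "inj_on G {1..n-1}" "F ` {0..n} \<inter> G ` {1..n-1} = {}"
  shows "card (F ` {0..n} \<union> G ` {1..(n::nat)-1}) = 2*n"
  using assms by (simp add: card_Un_disjoint card_image)

lemma inj_lt: "(\<And>a b. a \<in> A \<Longrightarrow> b \<in> A \<Longrightarrow> (a::nat) < b \<Longrightarrow> F a \<noteq> F b) \<Longrightarrow> inj_on F A"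
  by (metis inj_onI linorder_neq_iff)

definition col21 :: "nat \<Rightarrow> nat \<Rightarrow> nat" where "col21 k x = (if x \<le> k then 2 else 1)"
definition col12 :: "nat \<Rightarrow> nat \<Rightarrow> nat" where "col12 k x = (if x \<le> k then 1 else 2)"
definition colp :: "nat \<Rightarrow> nat \<Rightarrow> nat" where
  "colp i x = (if x = i then 2 else if x = Suc i then 1 else if x < i then 1 else 2)"
definition Rk :: "nat \<Rightarrow> nat \<Rightarrow> nat \<Rightarrow> bool" where "Rk k x y = (x \<le> k \<longleftrightarrow> y \<le> k)"
definition Rp :: "nat \<Rightarrow> nat \<Rightarrow> nat \<Rightarrow> bool" where
  "Rp i x y = (x = y \<or> (x = i \<and> y = Suc i) \<or> (x = Suc i \<and> y = i))"

lemma sbAll: "same_block (Pof A (\<lambda>_ _. True)) x y \<longleftrightarrow> x \<in> A \<and> y \<in> A"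
  by (subst Pof_sb) auto
lemma sbRk: "same_block (Pof A (Rk k)) x y \<longleftrightarrow> x \<in> A \<and> y \<in> A \<and> Rk k x y"
  by (rule Pof_sb) (auto simp: Rk_def)
lemma sbId: "same_block (Pof A (=)) x y \<longleftrightarrow> x \<in> A \<and> y \<in> A \<and> x = y"
  by (subst Pof_sb) auto
lemma sbRp: "same_block (Pof A (Rp i)) x y \<longleftrightarrow> x \<in> A \<and> y \<in> A \<and> Rp i x y"
  by (rule Pof_sb) (auto simp: Rp_def)
lemma ptAll: "partition_on A (Pof A (\<lambda>_ _. True))" by (rule Pof_part) auto
lemma ptRk: "partition_on A (Pof A (Rk k))" by (rule Pof_part) (auto simp: Rk_def)
lemma ptId: "partition_on A (Pof A (=))" by (rule Pof_part) auto
lemma ptRp: "partition_on A (Pof A (Rp i))" by (rule Pof_part) (auto simp: Rp_def)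

lemma fin: "partition_on A P \<Longrightarrow> c \<in> A \<rightarrow>\<^sub>E B \<Longrightarrow> (\<forall>x\<in>A. c x = f x)
  \<Longrightarrow> (\<forall>x\<in>A. \<forall>y\<in>A. same_block P x y \<longleftrightarrow> R x y) \<Longrightarrow> (P, c) = (Pof A R, restrict f A)"
  using P_eq_Pof[of A P] Pof_cong[of A "same_block P" R] PiE_restr[of c A B f] by auto

lemma sbiff:
  assumes part: "partition_on A P" and cv: "\<forall>x\<in>A. c x = 1 \<or> c x = (2::nat)"
    and B: "\<And>i j. i \<in> A \<Longrightarrow> j \<in> A \<Longrightarrow> c i = c j \<Longrightarrow> same_block P i j"
    and xy: "x \<in> A" "y \<in> A" "\<not> same_block P x y"
  shows "\<forall>u\<in>A. \<forall>v\<in>A. same_block P u v \<longleftrightarrow> c u = c v"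
proof (intro ballI iffI)
  fix u v assume uv: "u \<in> A" "v \<in> A"
  show "c u = c v \<Longrightarrow> same_block P u v" using B uv by blast
  assume sb: "same_block P u v"
  show "c u = c v"
  proof (rule ccontr)
    assume ne: "c u \<noteq> c v"
    have all: "same_block P w u" if w: "w \<in> A" for w
    proof -
      have "c w = 1 \<or> c w = 2" "c u = 1 \<or> c u = 2" "c v = 1 \<or> c v = 2" using cv w uv by blast+
      hence "c w = c u \<or> c w = c v" using ne by auto
      thus ?thesis
      proof
        assume "c w = c u" thus ?thesis using B w uv by blast
      next
        assume "c w = c v" hence "same_block P w v" using B w uv by blast
        thus ?thesis using sb_trans[OF part _ sb_sym[OF sb]] by blast
      qed
    qed
    have "same_block P x y" using sb_trans[OF part all[OF xy(1)] sb_sym[OF all[OF xy(2)]]] .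
    thus False using xy by simp
  qed
qed

lemma cvals: "c \<in> {1..n} \<rightarrow>\<^sub>E {1,2} \<Longrightarrow> \<forall>x\<in>{1..n}. c x = 1 \<or> c x = (2::nat)"
  using PiE_mem by fastforce

lemma hard2:
  assumes "n \<ge> 1" "(P, c) \<in> avoiding n {P1a1b, P1a2a, P1a2b}"
  shows "(P, c) \<in> (\<lambda>k. (Pof {1..n} (\<lambda>_ _. True), restrict (col21 k) {1..n})) ` {0..n}
     \<union> (\<lambda>k. (Pof {1..n} (Rk k), restrict (col21 k) {1..n})) ` {1..n-1}"
proof -
  let ?A = "{1..n}"
  have part: "partition_on ?A P" and cP: "c \<in> ?A \<rightarrow>\<^sub>E {1,2}"
    using assms(2) by (auto simp: avoiding_def colored_partitions_def)
  have cv: "\<forall>x\<in>?A. c x = 1 \<or> c x = 2" using cvals[OF cP] .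
  have h1: "\<And>i j. i \<in> ?A \<Longrightarrow> j \<in> ?A \<Longrightarrow> i < j \<Longrightarrow> same_block P i j \<Longrightarrow> c i = 1 \<Longrightarrow> c j = 2 \<Longrightarrow> False"
    using assms(2) unfolding avoiding_def by fastforce
  have h2: "\<And>i j. i \<in> ?A \<Longrightarrow> j \<in> ?A \<Longrightarrow> i < j \<Longrightarrow> \<not> same_block P i j \<Longrightarrow> c i = c j \<Longrightarrow> False"
    using assms(2) unfolding avoiding_def by fastforce
  have h3: "\<And>i j. i \<in> ?A \<Longrightarrow> j \<in> ?A \<Longrightarrow> i < j \<Longrightarrow> \<not> same_block P i j \<Longrightarrow> c i = 1 \<Longrightarrow> c j = 2 \<Longrightarrow> False"
    using assms(2) unfolding avoiding_def by fastforce
  have A: "\<And>i j. i \<in> ?A \<Longrightarrow> j \<in> ?A \<Longrightarrow> i < j \<Longrightarrow> c i = 1 \<Longrightarrow> c j = 2 \<Longrightarrow> False"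
    using h1 h3 by blast
  have B: "\<And>i j. i \<in> ?A \<Longrightarrow> j \<in> ?A \<Longrightarrow> c i = c j \<Longrightarrow> same_block P i j"
  proof -
    fix i j assume ij: "i \<in> ?A" "j \<in> ?A" "c i = c j"
    consider "i < j" | "i = j" | "j < i" by linarith
    thus "same_block P i j"
    proof cases
      case 1 thus ?thesis using h2 ij by blast
    next
      case 2 thus ?thesis using sb_refl[OF part] ij by blast
    next
      case 3
      hence "same_block P j i" using h2[of j i] ij by auto
      thus ?thesis by (rule sb_sym)
    qed
  qed
  obtain k where k: "k \<le> n" "\<forall>x\<in>?A. c x = 2 \<longleftrightarrow> x \<le> k"
  proof -
    have "\<exists>k\<le>n. \<forall>x\<in>?A. c x = 2 \<longleftrightarrow> x \<le> k"
    proof (rule dc)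
      fix x y assume xy: "1 \<le> y" "y < x" "x \<le> n" "c x = 2"
      hence yx: "y \<in> ?A" "x \<in> ?A" by auto
      hence "c y = 1 \<or> c y = 2" using cv by blast
      thus "c y = 2" using A[OF yx xy(2)] xy(4) by blast
    qed
    thus ?thesis using that by blast
  qed
  have cf: "\<forall>x\<in>?A. c x = col21 k x" using k cv by (auto simp: col21_def)
  show ?thesis
  proof (cases "\<forall>x\<in>?A. \<forall>y\<in>?A. same_block P x y")
    case True
    have "\<forall>x\<in>?A. \<forall>y\<in>?A. same_block P x y \<longleftrightarrow> True" using True by simp
    hence eq: "(P, c) = (Pof ?A (\<lambda>_ _. True), restrict (col21 k) ?A)"
      by (rule fin[OF part cP cf])
    have kin: "k \<in> {0..n}" using k by simp
    show ?thesis
      by (rule UnI1, rule image_eqI[where f="\<lambda>k. (Pof {1..n} (\<lambda>_ _. True), restrict (col21 k) {1..n})", OF eq kin])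
  next
    case False
    then obtain x y where xy: "x \<in> ?A" "y \<in> ?A" "\<not> same_block P x y" by blast
    have si: "\<forall>u\<in>?A. \<forall>v\<in>?A. same_block P u v \<longleftrightarrow> c u = c v" by (rule sbiff[where A="{1..n}" and P=P and c=c and x=x and y=y, OF part cv B xy])
    have "c x \<noteq> c y" using B xy by blast
    moreover have "c x = 1 \<or> c x = 2" "c y = 1 \<or> c y = 2" using cv xy by auto
    ultimately have "(c x = 2 \<and> c y = 1) \<or> (c x = 1 \<and> c y = 2)" by auto
    then obtain u w where uw: "u \<in> ?A" "w \<in> ?A" "c u = 2" "c w = 1" using xy by blast
    have "c u = 2 \<longleftrightarrow> u \<le> k" "c w = 2 \<longleftrightarrow> w \<le> k" using uw k(2) by blast+
    hence "u \<le> k" "\<not> w \<le> k" using uw by auto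
    hence kb: "1 \<le> k" "k \<le> n - 1" using uw by auto
    have "\<forall>u\<in>?A. \<forall>v\<in>?A. same_block P u v \<longleftrightarrow> Rk k u v"
    proof (intro ballI)
      fix u v assume uv: "u \<in> ?A" "v \<in> ?A"
      have "c u = 2 \<longleftrightarrow> u \<le> k" "c v = 2 \<longleftrightarrow> v \<le> k" "c u = 1 \<or> c u = 2" "c v = 1 \<or> c v = 2"
        using uv k(2) cv by blast+
      hence "c u = c v \<longleftrightarrow> Rk k u v" unfolding Rk_def by auto
      thus "same_block P u v \<longleftrightarrow> Rk k u v" using si uv by blast
    qed
    hence eq: "(P, c) = (Pof ?A (Rk k), restrict (col21 k) ?A)"
      by (rule fin[OF part cP cf])
    have kin: "k \<in> {1..n-1}" using kb by simp
    show ?thesis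
      by (rule UnI2, rule image_eqI[where f="\<lambda>k. (Pof {1..n} (Rk k), restrict (col21 k) {1..n})", OF eq kin])
  qed
qed

lemma avI: "partition_on {1..n} P \<Longrightarrow> c \<in> {1..n} \<rightarrow>\<^sub>E {1,2} \<Longrightarrow> (\<And>p. p \<in> S \<Longrightarrow> \<not> contains n (P,c) p)
  \<Longrightarrow> (P, c) \<in> avoiding n S"
  unfolding avoiding_def colored_partitions_def by blast

lemma r21: "restrict (col21 k) {1..n} \<in> {1..n} \<rightarrow>\<^sub>E {1,2}"
  unfolding restrict_PiE_iff col21_def by simp
lemma r12: "restrict (col12 k) {1..n} \<in> {1..n} \<rightarrow>\<^sub>E {1,2}"
  unfolding restrict_PiE_iff col12_def by simp
lemma rp: "restrict (colp k) {1..n} \<in> {1..n} \<rightarrow>\<^sub>E {1,2}"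
  unfolding restrict_PiE_iff colp_def by simp

lemma e2a: "(Pof {1..n} (\<lambda>_ _. True), restrict (col21 k) {1..n}) \<in> avoiding n {P1a1b, P1a2a, P1a2b}"
proof (rule avI[OF ptAll r21])
  fix p assume "p \<in> {P1a1b, P1a2a, P1a2b}"
  thus "\<not> contains n (Pof {1..n} (\<lambda>_ _. True), restrict (col21 k) {1..n}) p"
    by (auto simp: sbAll col21_def split: if_splits)
qed

lemma e2b: "(Pof {1..n} (Rk k), restrict (col21 k) {1..n}) \<in> avoiding n {P1a1b, P1a2a, P1a2b}"
proof (rule avI[OF ptRk r21])
  fix p assume "p \<in> {P1a1b, P1a2a, P1a2b}"
  thus "\<not> contains n (Pof {1..n} (Rk k), restrict (col21 k) {1..n}) p"
    by (auto simp: sbRk Rk_def col21_def split: if_splits)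
qed

lemma e3a: "(Pof {1..n} (\<lambda>_ _. True), restrict (col21 k) {1..n}) \<in> avoiding n {P1a1b, P1a2a, P1b2a}"
proof (rule avI[OF ptAll r21])
  fix p assume "p \<in> {P1a1b, P1a2a, P1b2a}"
  thus "\<not> contains n (Pof {1..n} (\<lambda>_ _. True), restrict (col21 k) {1..n}) p"
    by (auto simp: sbAll col21_def split: if_splits)
qed

lemma e3b: "(Pof {1..n} (Rk k), restrict (col12 k) {1..n}) \<in> avoiding n {P1a1b, P1a2a, P1b2a}"
proof (rule avI[OF ptRk r12])
  fix p assume "p \<in> {P1a1b, P1a2a, P1b2a}"
  thus "\<not> contains n (Pof {1..n} (Rk k), restrict (col12 k) {1..n}) p"
    by (auto simp: sbRk Rk_def col12_def split: if_splits)
qed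

lemma e1a: "(Pof {1..n} (=), restrict (col12 k) {1..n}) \<in> avoiding n {P1a1a, P1a1b, P1b2a}"
proof (rule avI[OF ptId r12])
  fix p assume "p \<in> {P1a1a, P1a1b, P1b2a}"
  thus "\<not> contains n (Pof {1..n} (=), restrict (col12 k) {1..n}) p"
    by (auto simp: sbId col12_def split: if_splits)
qed

lemma colp_lt: "x < y \<Longrightarrow> (colp i x = 2 \<and> colp i y = 1) \<longleftrightarrow> Rp i x y"
  by (auto simp: colp_def Rp_def)

lemma e1b: "(Pof {1..n} (Rp i), restrict (colp i) {1..n}) \<in> avoiding n {P1a1a, P1a1b, P1b2a}"
proof (rule avI[OF ptRp rp])
  fix p assume "p \<in> {P1a1a, P1a1b, P1b2a}"
  thus "\<not> contains n (Pof {1..n} (Rp i), restrict (colp i) {1..n}) p"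
    by (auto simp: sbRp Rp_def colp_def split: if_splits)
qed

lemma inj21: "inj_on (\<lambda>k. (X k, restrict (col21 k) {1..n})) {0..n}"
proof (rule inj_lt)
  fix a b assume ab: "a \<in> {0..n}" "b \<in> {0..n}" "a < b"
  show "(X a, restrict (col21 a) {1..n}) \<noteq> (X b, restrict (col21 b) {1..n})"
  proof
    assume "(X a, restrict (col21 a) {1..n}) = (X b, restrict (col21 b) {1..n})"
    hence "restrict (col21 a) {1..n} b = restrict (col21 b) {1..n} b" by simp
    moreover have "b \<in> {1..n}" using ab by auto
    ultimately show False using ab by (simp add: col21_def)
  qed
qed

lemma inj21': "inj_on (\<lambda>k. (X k, restrict (col21 k) {1..n})) {1..n-1}"
  by (rule inj_on_subset[OF inj21]) auto

lemma inj12: "inj_on (\<lambda>k. (X k, restrict (col12 k) {1..n})) {0..n}"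
proof (rule inj_lt)
  fix a b assume ab: "a \<in> {0..n}" "b \<in> {0..n}" "a < b"
  show "(X a, restrict (col12 a) {1..n}) \<noteq> (X b, restrict (col12 b) {1..n})"
  proof
    assume "(X a, restrict (col12 a) {1..n}) = (X b, restrict (col12 b) {1..n})"
    hence "restrict (col12 a) {1..n} b = restrict (col12 b) {1..n} b" by simp
    moreover have "b \<in> {1..n}" using ab by auto
    ultimately show False using ab by (simp add: col12_def)
  qed
qed

lemma inj12': "inj_on (\<lambda>k. (X k, restrict (col12 k) {1..n})) {1..n-1}"
  by (rule inj_on_subset[OF inj12]) auto

lemma injp: "inj_on (\<lambda>k. (X k, restrict (colp k) {1..n})) {1..n-1}"
proof (rule inj_lt)
  fix a b assume ab: "a \<in> {1..n-1}" "b \<in> {1..n-1}" "a < b"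
  show "(X a, restrict (colp a) {1..n}) \<noteq> (X b, restrict (colp b) {1..n})"
  proof
    assume "(X a, restrict (colp a) {1..n}) = (X b, restrict (colp b) {1..n})"
    hence "restrict (colp a) {1..n} a = restrict (colp b) {1..n} a" by simp
    moreover have "a \<in> {1..n}" using ab by auto
    ultimately show False using ab by (simp add: colp_def)
  qed
qed

lemma disjI: "(\<And>a b. a \<in> I \<Longrightarrow> b \<in> J \<Longrightarrow> fst (F a) \<noteq> fst (G b)) \<Longrightarrow> F ` I \<inter> G ` J = {}"
  by force

lemma PofAll_Rk: assumes "k \<in> {1..n-1}" shows "Pof {1..n} (\<lambda>_ _. True) \<noteq> Pof {1..n} (Rk k)"
proof
  assume "Pof {1..n} (\<lambda>_ _. True) = Pof {1..n} (Rk k)"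
  hence "same_block (Pof {1..n} (\<lambda>_ _. True)) 1 n = same_block (Pof {1..n} (Rk k)) 1 n" by simp
  thus False using assms by (auto simp add: sbAll sbRk Rk_def)
qed

lemma PofId_Rp: assumes "i \<in> {1..n-1}" shows "Pof {1..n} (=) \<noteq> Pof {1..n} (Rp i)"
proof
  assume "Pof {1..n} (=) = Pof {1..n} (Rp i)"
  hence "same_block (Pof {1..n} (=)) i (Suc i) = same_block (Pof {1..n} (Rp i)) i (Suc i)" by simp
  thus False using assms by (auto simp add: sbId sbRp Rp_def)
qed

lemma hard3:
  assumes "n \<ge> 1" "(P, c) \<in> avoiding n {P1a1b, P1a2a, P1b2a}"
  shows "(P, c) \<in> (\<lambda>k. (Pof {1..n} (\<lambda>_ _. True), restrict (col21 k) {1..n})) ` {0..n}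
     \<union> (\<lambda>k. (Pof {1..n} (Rk k), restrict (col12 k) {1..n})) ` {1..n-1}"
proof -
  let ?A = "{1..n}"
  have part: "partition_on ?A P" and cP: "c \<in> ?A \<rightarrow>\<^sub>E {1,2}"
    using assms(2) by (auto simp: avoiding_def colored_partitions_def)
  have cv: "\<forall>x\<in>?A. c x = 1 \<or> c x = 2" using cvals[OF cP] .
  have h1: "\<And>i j. i \<in> ?A \<Longrightarrow> j \<in> ?A \<Longrightarrow> i < j \<Longrightarrow> same_block P i j \<Longrightarrow> c i = 1 \<Longrightarrow> c j = 2 \<Longrightarrow> False"
    using assms(2) unfolding avoiding_def by fastforce
  have h2: "\<And>i j. i \<in> ?A \<Longrightarrow> j \<in> ?A \<Longrightarrow> i < j \<Longrightarrow> \<not> same_block P i j \<Longrightarrow> c i = c j \<Longrightarrow> False"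
    using assms(2) unfolding avoiding_def by fastforce
  have h3: "\<And>i j. i \<in> ?A \<Longrightarrow> j \<in> ?A \<Longrightarrow> i < j \<Longrightarrow> \<not> same_block P i j \<Longrightarrow> c i = 2 \<Longrightarrow> c j = 1 \<Longrightarrow> False"
    using assms(2) unfolding avoiding_def by fastforce
  have B: "\<And>i j. i \<in> ?A \<Longrightarrow> j \<in> ?A \<Longrightarrow> c i = c j \<Longrightarrow> same_block P i j"
  proof -
    fix i j assume ij: "i \<in> ?A" "j \<in> ?A" "c i = c j"
    consider "i < j" | "i = j" | "j < i" by linarith
    thus "same_block P i j"
    proof cases
      case 1 thus ?thesis using h2 ij by blast
    next
      case 2 thus ?thesis using sb_refl[OF part] ij by blast
    next
      case 3
      hence "same_block P j i" using h2[of j i] ij by auto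
      thus ?thesis by (rule sb_sym)
    qed
  qed
  show ?thesis
  proof (cases "\<forall>x\<in>?A. \<forall>y\<in>?A. same_block P x y")
    case True
    have A: "\<And>i j. i \<in> ?A \<Longrightarrow> j \<in> ?A \<Longrightarrow> i < j \<Longrightarrow> c i = 1 \<Longrightarrow> c j = 2 \<Longrightarrow> False"
      using h1 True by blast
    obtain k where k: "k \<le> n" "\<forall>x\<in>?A. c x = 2 \<longleftrightarrow> x \<le> k"
    proof -
      have "\<exists>k\<le>n. \<forall>x\<in>?A. c x = 2 \<longleftrightarrow> x \<le> k"
      proof (rule dc)
        fix x y assume xy: "1 \<le> y" "y < x" "x \<le> n" "c x = 2"
        hence yx: "y \<in> ?A" "x \<in> ?A" by auto
        hence "c y = 1 \<or> c y = 2" using cv by blast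
        thus "c y = 2" using A[OF yx xy(2)] xy(4) by blast
      qed
      thus ?thesis using that by blast
    qed
    have cf: "\<forall>x\<in>?A. c x = col21 k x" using k cv by (auto simp: col21_def)
    have "\<forall>x\<in>?A. \<forall>y\<in>?A. same_block P x y \<longleftrightarrow> True" using True by simp
    hence eq: "(P, c) = (Pof ?A (\<lambda>_ _. True), restrict (col21 k) ?A)"
      by (rule fin[OF part cP cf])
    have kin: "k \<in> {0..n}" using k by simp
    show ?thesis
      by (rule UnI1, rule image_eqI[where f="\<lambda>k. (Pof {1..n} (\<lambda>_ _. True), restrict (col21 k) {1..n})", OF eq kin])
  next
    case False
    then obtain x y where xy: "x \<in> ?A" "y \<in> ?A" "\<not> same_block P x y" by blast
    have si: "\<forall>u\<in>?A. \<forall>v\<in>?A. same_block P u v \<longleftrightarrow> c u = c v"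
      by (rule sbiff[where A="{1..n}" and P=P and c=c and x=x and y=y, OF part cv B xy])
    have A: "\<And>i j. i \<in> ?A \<Longrightarrow> j \<in> ?A \<Longrightarrow> i < j \<Longrightarrow> c i = 2 \<Longrightarrow> c j = 1 \<Longrightarrow> False"
    proof -
      fix i j assume ij: "i \<in> ?A" "j \<in> ?A" "i < j" "c i = 2" "c j = 1"
      hence "\<not> same_block P i j" using si by auto
      thus False using h3 ij by blast
    qed
    obtain k where k: "k \<le> n" "\<forall>x\<in>?A. c x = 1 \<longleftrightarrow> x \<le> k"
    proof -
      have "\<exists>k\<le>n. \<forall>x\<in>?A. c x = 1 \<longleftrightarrow> x \<le> k"
      proof (rule dc)
        fix x y assume xy: "1 \<le> y" "y < x" "x \<le> n" "c x = 1"
        hence yx: "y \<in> ?A" "x \<in> ?A" by auto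
        hence "c y = 1 \<or> c y = 2" using cv by blast
        thus "c y = 1" using A[OF yx xy(2)] xy(4) by blast
      qed
      thus ?thesis using that by blast
    qed
    have cf: "\<forall>x\<in>?A. c x = col12 k x" using k cv by (auto simp: col12_def)
    have "c x \<noteq> c y" using B xy by blast
    moreover have "c x = 1 \<or> c x = 2" "c y = 1 \<or> c y = 2" using cv xy by auto
    ultimately have "(c x = 1 \<and> c y = 2) \<or> (c x = 2 \<and> c y = 1)" by auto
    then obtain u w where uw: "u \<in> ?A" "w \<in> ?A" "c u = 1" "c w = 2" using xy by blast
    have "c u = 1 \<longleftrightarrow> u \<le> k" "c w = 1 \<longleftrightarrow> w \<le> k" using uw k(2) by blast+
    hence "u \<le> k" "\<not> w \<le> k" using uw by auto
    hence kb: "1 \<le> k" "k \<le> n - 1" using uw by auto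
    have "\<forall>u\<in>?A. \<forall>v\<in>?A. same_block P u v \<longleftrightarrow> Rk k u v"
    proof (intro ballI)
      fix u v assume uv: "u \<in> ?A" "v \<in> ?A"
      have "c u = 1 \<longleftrightarrow> u \<le> k" "c v = 1 \<longleftrightarrow> v \<le> k" "c u = 1 \<or> c u = 2" "c v = 1 \<or> c v = 2"
        using uv k(2) cv by blast+
      hence "c u = c v \<longleftrightarrow> Rk k u v" unfolding Rk_def by auto
      thus "same_block P u v \<longleftrightarrow> Rk k u v" using si uv by blast
    qed
    hence eq: "(P, c) = (Pof ?A (Rk k), restrict (col12 k) ?A)"
      by (rule fin[OF part cP cf])
    have kin: "k \<in> {1..n-1}" using kb by simp
    show ?thesis
      by (rule UnI2, rule image_eqI[where f="\<lambda>k. (Pof {1..n} (Rk k), restrict (col12 k) {1..n})", OF eq kin])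
  qed
qed

lemma hard1:
  assumes "n \<ge> 1" "(P, c) \<in> avoiding n {P1a1a, P1a1b, P1b2a}"
  shows "(P, c) \<in> (\<lambda>k. (Pof {1..n} (=), restrict (col12 k) {1..n})) ` {0..n}
     \<union> (\<lambda>i. (Pof {1..n} (Rp i), restrict (colp i) {1..n})) ` {1..n-1}"
proof -
  let ?A = "{1..n}"
  have part: "partition_on ?A P" and cP: "c \<in> ?A \<rightarrow>\<^sub>E {1,2}"
    using assms(2) by (auto simp: avoiding_def colored_partitions_def)
  have cv: "\<forall>x\<in>?A. c x = 1 \<or> c x = 2" using cvals[OF cP] .
  have h1: "\<And>i j. i \<in> ?A \<Longrightarrow> j \<in> ?A \<Longrightarrow> i < j \<Longrightarrow> same_block P i j \<Longrightarrow> c i = c j \<Longrightarrow> False"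
    using assms(2) unfolding avoiding_def by fastforce
  have h2: "\<And>i j. i \<in> ?A \<Longrightarrow> j \<in> ?A \<Longrightarrow> i < j \<Longrightarrow> same_block P i j \<Longrightarrow> c i = 1 \<Longrightarrow> c j = 2 \<Longrightarrow> False"
    using assms(2) unfolding avoiding_def by fastforce
  have h3: "\<And>i j. i \<in> ?A \<Longrightarrow> j \<in> ?A \<Longrightarrow> i < j \<Longrightarrow> \<not> same_block P i j \<Longrightarrow> c i = 2 \<Longrightarrow> c j = 1 \<Longrightarrow> False"
    using assms(2) unfolding avoiding_def by fastforce
  have W: "c i = 2 \<and> c j = 1" if ij: "i \<in> ?A" "j \<in> ?A" "i < j" "same_block P i j" for i j
  proof -
    have "c i = 1 \<or> c i = 2" "c j = 1 \<or> c j = 2" using cv ij by blast+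
    moreover have "c i \<noteq> c j" using h1[OF ij] by blast
    moreover have "\<not> (c i = 1 \<and> c j = 2)" using h2[OF ij] by blast
    ultimately show ?thesis by auto
  qed
  have X: "same_block P i j" if ij: "i \<in> ?A" "j \<in> ?A" "i < j" "c i = 2" "c j = 1" for i j
    using h3[OF ij(1,2,3) _ ij(4,5)] by blast
  show ?thesis
  proof (cases "\<exists>i\<in>?A. \<exists>j\<in>?A. i < j \<and> c i = 2 \<and> c j = 1")
    case True
    then obtain i j where ij: "i \<in> ?A" "j \<in> ?A" "i < j" "c i = 2" "c j = 1" by blast
    have sbij: "same_block P i j" using X[OF ij] .
    have cl1: "c m = 1" if m: "m \<in> ?A" "m < j" "m \<noteq> i" for m
    proof (rule ccontr)
      assume "c m \<noteq> 1"
      hence cm: "c m = 2" using cv m by blast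
      have "same_block P m j" using X[OF m(1) ij(2) m(2) cm ij(5)] .
      hence smi: "same_block P m i" using sb_trans[OF part _ sb_sym[OF sbij]] by blast
      consider "m < i" | "i < m" using m(3) by linarith
      thus False
      proof cases
        case 1 thus False using W[OF m(1) ij(1) 1 smi] ij(4) by simp
      next
        case 2 thus False using W[OF ij(1) m(1) 2 sb_sym[OF smi]] cm by simp
      qed
    qed
    have cl2: "c m = 2" if m: "m \<in> ?A" "i < m" "m \<noteq> j" for m
    proof (rule ccontr)
      assume "c m \<noteq> 2"
      hence cm: "c m = 1" using cv m by blast
      have sim: "same_block P i m" using X[OF ij(1) m(1) m(2) ij(4) cm] .
      have sjm: "same_block P j m" using sb_trans[OF part sb_sym[OF sbij] sim] .
      consider "m < j" | "j < m" using m(3) by linarith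
      thus False
      proof cases
        case 1 thus False using W[OF m(1) ij(2) 1 sb_sym[OF sjm]] cm by simp
      next
        case 2 thus False using W[OF ij(2) m(1) 2 sjm] ij(5) by simp
      qed
    qed
    have jS: "j = Suc i"
    proof (rule ccontr)
      assume "j \<noteq> Suc i"
      hence lt: "Suc i < j" using ij(3) by linarith
      have m: "Suc i \<in> ?A" using ij(1,2) lt by auto
      have "c (Suc i) = 1" using cl1[OF m lt] by simp
      moreover have "c (Suc i) = 2" using cl2[OF m] lt by simp
      ultimately show False by simp
    qed
    have cf: "\<forall>x\<in>?A. c x = colp i x"
    proof
      fix x assume x: "x \<in> ?A"
      consider "x = i" | "x = Suc i" | "x < i" | "Suc i < x" by linarith
      thus "c x = colp i x"
      proof cases
        case 1 thus ?thesis using ij(4) by (simp add: colp_def)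
      next
        case 2 thus ?thesis using ij(5) jS by (simp add: colp_def)
      next
        case 3 thus ?thesis using cl1[OF x] jS by (simp add: colp_def)
      next
        case 4 thus ?thesis using cl2[OF x] jS by (simp add: colp_def)
      qed
    qed
    have lt_iff: "same_block P x y \<longleftrightarrow> Rp i x y" if xy: "x \<in> ?A" "y \<in> ?A" "x < y" for x y
    proof -
      have "same_block P x y \<longleftrightarrow> c x = 2 \<and> c y = 1" using W[OF xy] X[OF xy] by blast
      also have "\<dots> \<longleftrightarrow> colp i x = 2 \<and> colp i y = 1" using cf xy by simp
      also have "\<dots> \<longleftrightarrow> Rp i x y" using colp_lt[OF xy(3)] .
      finally show ?thesis .
    qed
    have rel: "\<forall>x\<in>?A. \<forall>y\<in>?A. same_block P x y \<longleftrightarrow> Rp i x y"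
    proof (intro ballI)
      fix x y assume xy: "x \<in> ?A" "y \<in> ?A"
      consider "x < y" | "x = y" | "y < x" by linarith
      thus "same_block P x y \<longleftrightarrow> Rp i x y"
      proof cases
        case 1 thus ?thesis using lt_iff xy by blast
      next
        case 2 thus ?thesis using sb_refl[OF part xy(1)] by (simp add: Rp_def)
      next
        case 3
        have "same_block P y x \<longleftrightarrow> Rp i y x" using lt_iff xy 3 by blast
        moreover have "Rp i y x \<longleftrightarrow> Rp i x y" by (auto simp: Rp_def)
        ultimately show ?thesis using sb_sym by blast
      qed
    qed
    have eq: "(P, c) = (Pof ?A (Rp i), restrict (colp i) ?A)"
      by (rule fin[OF part cP cf rel])
    have kin: "i \<in> {1..n-1}" using ij jS by auto
    show ?thesis
      by (rule UnI2, rule image_eqI[where f="\<lambda>i. (Pof {1..n} (Rp i), restrict (colp i) {1..n})", OF eq kin])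
  next
    case False
    have A: "\<And>i j. i \<in> ?A \<Longrightarrow> j \<in> ?A \<Longrightarrow> i < j \<Longrightarrow> c i = 2 \<Longrightarrow> c j = 1 \<Longrightarrow> False"
      using False by blast
    obtain k where k: "k \<le> n" "\<forall>x\<in>?A. c x = 1 \<longleftrightarrow> x \<le> k"
    proof -
      have "\<exists>k\<le>n. \<forall>x\<in>?A. c x = 1 \<longleftrightarrow> x \<le> k"
      proof (rule dc)
        fix x y assume xy: "1 \<le> y" "y < x" "x \<le> n" "c x = 1"
        hence yx: "y \<in> ?A" "x \<in> ?A" by auto
        hence "c y = 1 \<or> c y = 2" using cv by blast
        thus "c y = 1" using A[OF yx xy(2)] xy(4) by blast
      qed
      thus ?thesis using that by blast
    qed
    have cf: "\<forall>x\<in>?A. c x = col12 k x" using k cv by (auto simp: col12_def)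
    have nlt: "\<not> same_block P x y" if xy: "x \<in> ?A" "y \<in> ?A" "x < y" for x y
    proof
      assume "same_block P x y"
      hence "c x = 2 \<and> c y = 1" using W[OF xy] by blast
      thus False using A[OF xy] by blast
    qed
    have rel: "\<forall>x\<in>?A. \<forall>y\<in>?A. same_block P x y \<longleftrightarrow> x = y"
    proof (intro ballI)
      fix x y assume xy: "x \<in> ?A" "y \<in> ?A"
      consider "x < y" | "x = y" | "y < x" by linarith
      thus "same_block P x y \<longleftrightarrow> x = y"
      proof cases
        case 1 thus ?thesis using nlt[OF xy 1] by simp
      next
        case 2 thus ?thesis using sb_refl[OF part xy(1)] by simp
      next
        case 3 thus ?thesis using nlt[OF xy(2,1) 3] sb_sym by fastforce
      qed
    qed
    have eq: "(P, c) = (Pof ?A (=), restrict (col12 k) ?A)"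
      by (rule fin[OF part cP cf rel])
    have kin: "k \<in> {0..n}" using k by simp
    show ?thesis
      by (rule UnI1, rule image_eqI[where f="\<lambda>k. (Pof {1..n} (=), restrict (col12 k) {1..n})", OF eq kin])
  qed
qed

lemma setI: "(\<And>x. x \<in> S \<Longrightarrow> x \<in> T) \<Longrightarrow> T \<subseteq> S \<Longrightarrow> S = T" by blast

theorem mainTheorem12:
  fixes n :: nat
  assumes "n \<ge> 1"
  shows "card (avoiding n {P1a1a, P1a1b, P1b2a}) = 2 * n
    \<and> card (avoiding n {P1a1b, P1a2a, P1a2b}) = 2 * n
    \<and> card (avoiding n {P1a1b, P1a2a, P1b2a}) = 2 * n"
proof (intro conjI)
  have "avoiding n {P1a1a, P1a1b, P1b2a} = (\<lambda>k. (Pof {1..n} (=), restrict (col12 k) {1..n})) ` {0..n}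
     \<union> (\<lambda>i. (Pof {1..n} (Rp i), restrict (colp i) {1..n})) ` {1..n-1}"
  proof (rule setI)
    fix x assume "x \<in> avoiding n {P1a1a, P1a1b, P1b2a}"
    thus "x \<in> (\<lambda>k. (Pof {1..n} (=), restrict (col12 k) {1..n})) ` {0..n}
     \<union> (\<lambda>i. (Pof {1..n} (Rp i), restrict (colp i) {1..n})) ` {1..n-1}"
      using hard1[OF assms, of "fst x" "snd x"] by simp
  next
    show "(\<lambda>k. (Pof {1..n} (=), restrict (col12 k) {1..n})) ` {0..n}
     \<union> (\<lambda>i. (Pof {1..n} (Rp i), restrict (colp i) {1..n})) ` {1..n-1} \<subseteq> avoiding n {P1a1a, P1a1b, P1b2a}"
      using e1a e1b by blast
  qed
  also have "card \<dots> = 2 * n"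
    by (rule card_two_fam[OF assms inj12 injp disjI]) (use PofId_Rp in auto)
  finally show "card (avoiding n {P1a1a, P1a1b, P1b2a}) = 2 * n" .
next
  have "avoiding n {P1a1b, P1a2a, P1a2b} = (\<lambda>k. (Pof {1..n} (\<lambda>_ _. True), restrict (col21 k) {1..n})) ` {0..n}
     \<union> (\<lambda>k. (Pof {1..n} (Rk k), restrict (col21 k) {1..n})) ` {1..n-1}"
  proof (rule setI)
    fix x assume "x \<in> avoiding n {P1a1b, P1a2a, P1a2b}"
    thus "x \<in> (\<lambda>k. (Pof {1..n} (\<lambda>_ _. True), restrict (col21 k) {1..n})) ` {0..n}
     \<union> (\<lambda>k. (Pof {1..n} (Rk k), restrict (col21 k) {1..n})) ` {1..n-1}"
      using hard2[OF assms, of "fst x" "snd x"] by simp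
  next
    show "(\<lambda>k. (Pof {1..n} (\<lambda>_ _. True), restrict (col21 k) {1..n})) ` {0..n}
     \<union> (\<lambda>k. (Pof {1..n} (Rk k), restrict (col21 k) {1..n})) ` {1..n-1} \<subseteq> avoiding n {P1a1b, P1a2a, P1a2b}"
      using e2a e2b by blast
  qed
  also have "card \<dots> = 2 * n"
    by (rule card_two_fam[OF assms inj21 inj21' disjI]) (use PofAll_Rk in auto)
  finally show "card (avoiding n {P1a1b, P1a2a, P1a2b}) = 2 * n" .
next
  have "avoiding n {P1a1b, P1a2a, P1b2a} = (\<lambda>k. (Pof {1..n} (\<lambda>_ _. True), restrict (col21 k) {1..n})) ` {0..n}
     \<union> (\<lambda>k. (Pof {1..n} (Rk k), restrict (col12 k) {1..n})) ` {1..n-1}"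
  proof (rule setI)
    fix x assume "x \<in> avoiding n {P1a1b, P1a2a, P1b2a}"
    thus "x \<in> (\<lambda>k. (Pof {1..n} (\<lambda>_ _. True), restrict (col21 k) {1..n})) ` {0..n}
     \<union> (\<lambda>k. (Pof {1..n} (Rk k), restrict (col12 k) {1..n})) ` {1..n-1}"
      using hard3[OF assms, of "fst x" "snd x"] by simp
  next
    show "(\<lambda>k. (Pof {1..n} (\<lambda>_ _. True), restrict (col21 k) {1..n})) ` {0..n}
     \<union> (\<lambda>k. (Pof {1..n} (Rk k), restrict (col12 k) {1..n})) ` {1..n-1} \<subseteq> avoiding n {P1a1b, P1a2a, P1b2a}"
      using e3a e3b by blast
  qed
  also have "card \<dots> = 2 * n"
    by (rule card_two_fam[OF assms inj21 inj12' disjI]) (use PofAll_Rk in auto)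
  finally show "card (avoiding n {P1a1b, P1a2a, P1b2a}) = 2 * n" .
qed
end
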